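(* If $F$ is a non-abelian free metabelian Lie algebra over a field $k$, then $\mathrm{Fit}(F)=F^2$.
   Context: A Lie algebra is metabelian if $(a\circ b)\circ(c\circ d)=0$ identically; free metabelian means free in the variety of metabelian Lie $k$-algebras. $F^2$ is the ideal spanned by all products $a\circ b$; $\mathrm{Fit}(F)$ (Fitting radical) is the ideal generated by all elements lying in nilpotent ideals of $F$. *)

theory Defs
  imports Main
begin

record ('k, 'a) liealg =
  lcarrier :: "'a set"
  lzero :: 'a
  ladd :: "'a \<Rightarrow> 'a \<Rightarrow> 'a"
  lneg :: "'a \<Rightarrow> 'a"
  lsmult :: "'k \<Rightarrow> 'a \<Rightarrow> 'a"
  lbr :: "'a \<Rightarrow> 'a \<Rightarrow> 'a"

definition lie_algebra :: "('k::field, 'a) liealg \<Rightarrow> bool" where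
  "lie_algebra L \<longleftrightarrow>
     lzero L \<in> lcarrier L \<and>
     (\<forall>x\<in>lcarrier L. \<forall>y\<in>lcarrier L. ladd L x y \<in> lcarrier L) \<and>
     (\<forall>x\<in>lcarrier L. lneg L x \<in> lcarrier L) \<and>
     (\<forall>c. \<forall>x\<in>lcarrier L. lsmult L c x \<in> lcarrier L) \<and>
     (\<forall>x\<in>lcarrier L. \<forall>y\<in>lcarrier L. lbr L x y \<in> lcarrier L) \<and>
     (\<forall>x\<in>lcarrier L. \<forall>y\<in>lcarrier L. \<forall>z\<in>lcarrier L.
        ladd L (ladd L x y) z = ladd L x (ladd L y z)) \<and>
     (\<forall>x\<in>lcarrier L. \<forall>y\<in>lcarrier L. ladd L x y = ladd L y x) \<and>
     (\<forall>x\<in>lcarrier L. ladd L (lzero L) x = x) \<and>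
     (\<forall>x\<in>lcarrier L. ladd L (lneg L x) x = lzero L) \<and>
     (\<forall>a b. \<forall>x\<in>lcarrier L. lsmult L a (lsmult L b x) = lsmult L (a * b) x) \<and>
     (\<forall>x\<in>lcarrier L. lsmult L 1 x = x) \<and>
     (\<forall>a. \<forall>x\<in>lcarrier L. \<forall>y\<in>lcarrier L.
        lsmult L a (ladd L x y) = ladd L (lsmult L a x) (lsmult L a y)) \<and>
     (\<forall>a b. \<forall>x\<in>lcarrier L. lsmult L (a + b) x = ladd L (lsmult L a x) (lsmult L b x)) \<and>
     (\<forall>x\<in>lcarrier L. \<forall>y\<in>lcarrier L. \<forall>z\<in>lcarrier L.
        lbr L (ladd L x y) z = ladd L (lbr L x z) (lbr L y z)) \<and>
     (\<forall>x\<in>lcarrier L. \<forall>y\<in>lcarrier L. \<forall>z\<in>lcarrier L.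
        lbr L x (ladd L y z) = ladd L (lbr L x y) (lbr L x z)) \<and>
     (\<forall>a. \<forall>x\<in>lcarrier L. \<forall>y\<in>lcarrier L.
        lbr L (lsmult L a x) y = lsmult L a (lbr L x y) \<and>
        lbr L x (lsmult L a y) = lsmult L a (lbr L x y)) \<and>
     (\<forall>x\<in>lcarrier L. lbr L x x = lzero L) \<and>
     (\<forall>x\<in>lcarrier L. \<forall>y\<in>lcarrier L. \<forall>z\<in>lcarrier L.
        ladd L (ladd L (lbr L x (lbr L y z)) (lbr L y (lbr L z x))) (lbr L z (lbr L x y))
          = lzero L)"

definition metabelian :: "('k, 'a) liealg \<Rightarrow> bool" where
  "metabelian L \<longleftrightarrow>
     (\<forall>a\<in>lcarrier L. \<forall>b\<in>lcarrier L. \<forall>c\<in>lcarrier L. \<forall>d\<in>lcarrier L.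
        lbr L (lbr L a b) (lbr L c d) = lzero L)"

definition abelian :: "('k, 'a) liealg \<Rightarrow> bool" where
  "abelian L \<longleftrightarrow> (\<forall>a\<in>lcarrier L. \<forall>b\<in>lcarrier L. lbr L a b = lzero L)"

definition lie_hom :: "('k, 'a) liealg \<Rightarrow> ('k, 'b) liealg \<Rightarrow> ('a \<Rightarrow> 'b) \<Rightarrow> bool" where
  "lie_hom L M f \<longleftrightarrow>
     (\<forall>x\<in>lcarrier L. f x \<in> lcarrier M) \<and>
     (\<forall>x\<in>lcarrier L. \<forall>y\<in>lcarrier L. f (ladd L x y) = ladd M (f x) (f y)) \<and>
     (\<forall>c. \<forall>x\<in>lcarrier L. f (lsmult L c x) = lsmult M c (f x)) \<and>
     (\<forall>x\<in>lcarrier L. \<forall>y\<in>lcarrier L. f (lbr L x y) = lbr M (f x) (f y))"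

text \<open>Free metabelian Lie algebra on generators X via iota. The universal property is
  required for all metabelian Lie algebras whose carrier lies in the type 'a of F.\<close>
definition free_metabelian :: "('k::field, 'a) liealg \<Rightarrow> 'x set \<Rightarrow> ('x \<Rightarrow> 'a) \<Rightarrow> bool" where
  "free_metabelian F X iota \<longleftrightarrow>
     lie_algebra F \<and> metabelian F \<and> iota ` X \<subseteq> lcarrier F \<and>
     (\<forall>M :: ('k, 'a) liealg. lie_algebra M \<and> metabelian M \<longrightarrow>
        (\<forall>g. (\<forall>x\<in>X. g x \<in> lcarrier M) \<longrightarrow>
           (\<exists>f. lie_hom F M f \<and> (\<forall>x\<in>X. f (iota x) = g x)) \<and>
           (\<forall>f1 f2. lie_hom F M f1 \<and> lie_hom F M f2 \<and>
               (\<forall>x\<in>X. f1 (iota x) = g x) \<and> (\<forall>x\<in>X. f2 (iota x) = g x)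
             \<longrightarrow> (\<forall>y\<in>lcarrier F. f1 y = f2 y))))"

definition lsubspace :: "('k, 'a) liealg \<Rightarrow> 'a set \<Rightarrow> bool" where
  "lsubspace L V \<longleftrightarrow> V \<subseteq> lcarrier L \<and> lzero L \<in> V \<and>
     (\<forall>x\<in>V. \<forall>y\<in>V. ladd L x y \<in> V) \<and> (\<forall>c. \<forall>x\<in>V. lsmult L c x \<in> V)"

definition lspan :: "('k, 'a) liealg \<Rightarrow> 'a set \<Rightarrow> 'a set" where
  "lspan L S = \<Inter>{V. lsubspace L V \<and> S \<subseteq> V}"

definition lideal :: "('k, 'a) liealg \<Rightarrow> 'a set \<Rightarrow> bool" where
  "lideal L I \<longleftrightarrow> lsubspace L I \<and> (\<forall>x\<in>lcarrier L. \<forall>i\<in>I. lbr L x i \<in> I)"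

definition ideal_gen :: "('k, 'a) liealg \<Rightarrow> 'a set \<Rightarrow> 'a set" where
  "ideal_gen L S = \<Inter>{I. lideal L I \<and> S \<subseteq> I}"

text \<open>Lower central series of a subspace I (viewed as a Lie algebra):
  I^1 = I, I^(n+1) = span [I, I^n]; here indexed from 0.\<close>
fun lcs :: "('k, 'a) liealg \<Rightarrow> 'a set \<Rightarrow> nat \<Rightarrow> 'a set" where
  "lcs L I 0 = I"
| "lcs L I (Suc n) = lspan L {lbr L a b | a b. a \<in> I \<and> b \<in> lcs L I n}"

definition nilpotent_set :: "('k, 'a) liealg \<Rightarrow> 'a set \<Rightarrow> bool" where
  "nilpotent_set L I \<longleftrightarrow> (\<exists>n. lcs L I n \<subseteq> {lzero L})"

definition fitting :: "('k, 'a) liealg \<Rightarrow> 'a set" where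
  "fitting L = ideal_gen L (\<Union>{I. lideal L I \<and> nilpotent_set L I})"

definition derived :: "('k, 'a) liealg \<Rightarrow> 'a set" where
  "derived L = lspan L {lbr L a b | a b. a \<in> lcarrier L \<and> b \<in> lcarrier L}"

end

theory Submission
  imports Defs
begin


locale LA =
  fixes L :: "('k::field, 'a) liealg"
  assumes la: "lie_algebra L"
begin

abbreviation "CC \<equiv> lcarrier L"
abbreviation "zR \<equiv> lzero L"
abbreviation "pA \<equiv> ladd L"
abbreviation "nG \<equiv> lneg L"
abbreviation "sM \<equiv> lsmult L"
abbreviation "bR \<equiv> lbr L"

lemma zero_in[simp]: "zR \<in> CC" using la unfolding lie_algebra_def by metis
lemma add_in[simp]: "x\<in>CC \<Longrightarrow> y\<in>CC \<Longrightarrow> pA x y \<in> CC" using la unfolding lie_algebra_def by metis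
lemma neg_in[simp]: "x\<in>CC \<Longrightarrow> nG x \<in> CC" using la unfolding lie_algebra_def by metis
lemma sm_in[simp]: "x\<in>CC \<Longrightarrow> sM c x \<in> CC" using la unfolding lie_algebra_def by metis
lemma br_in[simp]: "x\<in>CC \<Longrightarrow> y\<in>CC \<Longrightarrow> bR x y \<in> CC" using la unfolding lie_algebra_def by metis
lemma add_assoc: "x\<in>CC \<Longrightarrow> y\<in>CC \<Longrightarrow> z\<in>CC \<Longrightarrow> pA (pA x y) z = pA x (pA y z)"
  using la unfolding lie_algebra_def by metis
lemma add_comm: "x\<in>CC \<Longrightarrow> y\<in>CC \<Longrightarrow> pA x y = pA y x" using la unfolding lie_algebra_def by metis
lemma zero_l[simp]: "x\<in>CC \<Longrightarrow> pA zR x = x" using la unfolding lie_algebra_def by metis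
lemma neg_l[simp]: "x\<in>CC \<Longrightarrow> pA (nG x) x = zR" using la unfolding lie_algebra_def by metis
lemma sm_assoc: "x\<in>CC \<Longrightarrow> sM a (sM b x) = sM (a*b) x" using la unfolding lie_algebra_def by metis
lemma sm_one[simp]: "x\<in>CC \<Longrightarrow> sM 1 x = x" using la unfolding lie_algebra_def by metis
lemma sm_dist_vec: "x\<in>CC \<Longrightarrow> y\<in>CC \<Longrightarrow> sM a (pA x y) = pA (sM a x) (sM a y)"
  using la unfolding lie_algebra_def by metis
lemma sm_dist_sc: "x\<in>CC \<Longrightarrow> sM (a+b) x = pA (sM a x) (sM b x)"
  using la unfolding lie_algebra_def by metis
lemma br_add_l: "x\<in>CC \<Longrightarrow> y\<in>CC \<Longrightarrow> z\<in>CC \<Longrightarrow> bR (pA x y) z = pA (bR x z) (bR y z)"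
  using la unfolding lie_algebra_def by metis
lemma br_add_r: "x\<in>CC \<Longrightarrow> y\<in>CC \<Longrightarrow> z\<in>CC \<Longrightarrow> bR x (pA y z) = pA (bR x y) (bR x z)"
  using la unfolding lie_algebra_def by metis
lemma br_sm_l: "x\<in>CC \<Longrightarrow> y\<in>CC \<Longrightarrow> bR (sM a x) y = sM a (bR x y)"
  using la unfolding lie_algebra_def by metis
lemma br_sm_r: "x\<in>CC \<Longrightarrow> y\<in>CC \<Longrightarrow> bR x (sM a y) = sM a (bR x y)"
  using la unfolding lie_algebra_def by metis
lemma br_self[simp]: "x\<in>CC \<Longrightarrow> bR x x = zR" using la unfolding lie_algebra_def by metis

lemma zero_r[simp]: "x\<in>CC \<Longrightarrow> pA x zR = x" using add_comm[of x zR] by simp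

lemma add4: "a\<in>CC \<Longrightarrow> b\<in>CC \<Longrightarrow> c\<in>CC \<Longrightarrow> d\<in>CC \<Longrightarrow>
   pA (pA a b) (pA c d) = pA (pA a c) (pA b d)"
  by (metis add_assoc add_comm add_in)

lemma cancel_l: assumes "x\<in>CC" "y\<in>CC" "z\<in>CC" "pA x y = pA x z" shows "y = z"
proof -
  have "y = pA (pA (nG x) x) y" using assms by simp
  also have "\<dots> = pA (nG x) (pA x y)" using assms by (metis add_assoc neg_in)
  also have "\<dots> = pA (nG x) (pA x z)" using assms by simp
  also have "\<dots> = pA (pA (nG x) x) z" using assms by (metis add_assoc neg_in)
  also have "\<dots> = z" using assms by simp
  finally show ?thesis .
qed

lemma idem_zero: "x\<in>CC \<Longrightarrow> pA x x = x \<Longrightarrow> x = zR"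
  using cancel_l[of x x zR] by simp

lemma sm_zero_sc[simp]: "x\<in>CC \<Longrightarrow> sM 0 x = zR"
  using sm_dist_sc[of x 0 0] idem_zero[of "sM 0 x"] by simp

lemma sm_zero_vec[simp]: "sM c zR = zR"
  using sm_dist_vec[of zR zR c] idem_zero[of "sM c zR"] by simp

lemma neg_sm: assumes "x\<in>CC" shows "nG x = sM (-1) x"
proof -
  have "pA x (nG x) = zR" using assms add_comm[of x "nG x"] by simp
  also have "zR = sM (1 + -1) x" using assms by simp
  also have "\<dots> = pA x (sM (-1) x)" using assms sm_dist_sc[of x 1 "-1"] by simp
  finally show ?thesis using cancel_l[of x "nG x" "sM (-1) x"] assms by simp
qed

lemma br_zero_l[simp]: "x\<in>CC \<Longrightarrow> bR zR x = zR"
  using br_sm_l[of zR x 0] by simp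
lemma br_zero_r[simp]: "x\<in>CC \<Longrightarrow> bR x zR = zR"
  using br_sm_r[of x zR 0] by simp

lemma sm_eq_cancel: assumes "v\<in>CC" "v \<noteq> zR" "sM c v = sM d v" shows "c = d"
proof (rule ccontr)
  assume ne: "c \<noteq> d"
  have "sM (c + - d) v = pA (sM c v) (sM (-d) v)" using assms sm_dist_sc[of v c "-d"] by simp
  also have "\<dots> = pA (sM d v) (sM (-d) v)" using assms by simp
  also have "\<dots> = sM (d + - d) v" using assms sm_dist_sc[of v d "-d"] by simp
  also have "\<dots> = zR" using assms by simp
  finally have z: "sM (c + - d) v = zR" .
  have "v = sM (inverse (c + - d) * (c + - d)) v" using ne assms by simp
  also have "\<dots> = sM (inverse (c + - d)) (sM (c + - d) v)" using assms sm_assoc by simp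
  also have "\<dots> = zR" using z by simp
  finally show False using assms by simp
qed

lemma sub_carrier: "lsubspace L CC"
  unfolding lsubspace_def by simp

lemma lspan_sup: "S \<subseteq> lspan L S" unfolding lspan_def by blast

lemma lspan_least: "lsubspace L V \<Longrightarrow> S \<subseteq> V \<Longrightarrow> lspan L S \<subseteq> V"
  unfolding lspan_def by blast

lemma lsub_zero: "lsubspace L V \<Longrightarrow> zR \<in> V" unfolding lsubspace_def by blast
lemma lsub_add: "lsubspace L V \<Longrightarrow> x \<in> V \<Longrightarrow> y \<in> V \<Longrightarrow> pA x y \<in> V" unfolding lsubspace_def by blast
lemma lsub_sm: "lsubspace L V \<Longrightarrow> x \<in> V \<Longrightarrow> sM c x \<in> V" unfolding lsubspace_def by blast
lemma lsub_C: "lsubspace L V \<Longrightarrow> V \<subseteq> CC" unfolding lsubspace_def by blast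

lemma sub_Inter: assumes "\<V> \<noteq> {}" "\<forall>V\<in>\<V>. lsubspace L V" shows "lsubspace L (\<Inter>\<V>)"
proof -
  obtain V0 where V0: "V0 \<in> \<V>" using assms by blast
  show ?thesis unfolding lsubspace_def
  proof (intro conjI ballI allI)
    show "\<Inter>\<V> \<subseteq> CC" using V0 assms(2) lsub_C by blast
    show "zR \<in> \<Inter>\<V>" using assms(2) lsub_zero by blast
    show "pA x y \<in> \<Inter>\<V>" if "x \<in> \<Inter>\<V>" "y \<in> \<Inter>\<V>" for x y
      using that assms(2) lsub_add by blast
    show "sM c x \<in> \<Inter>\<V>" if "x \<in> \<Inter>\<V>" for c x
      using that assms(2) lsub_sm by blast
  qed
qed

lemma lspan_sub: assumes "S \<subseteq> CC" shows "lsubspace L (lspan L S)"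
proof -
  have ne: "CC \<in> {V. lsubspace L V \<and> S \<subseteq> V}" using assms sub_carrier by blast
  show ?thesis unfolding lspan_def by (rule sub_Inter) (use ne in blast)+
qed

lemma lspan_mono: "S \<subseteq> T \<Longrightarrow> T \<subseteq> CC \<Longrightarrow> lspan L S \<subseteq> lspan L T"
  by (meson lspan_least lspan_sub lspan_sup order_trans)

lemma lspan_in: "S \<subseteq> CC \<Longrightarrow> lspan L S \<subseteq> CC"
  using lspan_sub unfolding lsubspace_def by blast

lemma lspan_insert: assumes S: "S \<subseteq> CC" and x: "x \<in> CC"
  shows "lspan L (insert x S) \<subseteq> {pA s (sM c x) | s c. s \<in> lspan L S}"
proof (rule lspan_least)
  let ?W = "{pA s (sM c x) | s c. s \<in> lspan L S}"
  have sub: "lsubspace L (lspan L S)" using lspan_sub[OF S] .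
  have sC: "s \<in> lspan L S \<Longrightarrow> s \<in> CC" for s using lsub_C[OF sub] by blast
  show "lsubspace L ?W" unfolding lsubspace_def
  proof (intro conjI ballI allI)
    show "?W \<subseteq> CC" using sC x by auto
    show "zR \<in> ?W" using lsub_zero[OF sub] x
      by (auto intro!: exI[of _ zR] exI[of _ 0])
  next
    fix u v assume "u \<in> ?W" "v \<in> ?W"
    then obtain s c s' c' where u: "u = pA s (sM c x)" "s \<in> lspan L S"
      and v: "v = pA s' (sM c' x)" "s' \<in> lspan L S" by blast
    have "pA u v = pA (pA s s') (sM (c + c') x)"
      using u v sC x by (simp add: add4 sm_dist_sc)
    moreover have "pA s s' \<in> lspan L S" using lsub_add[OF sub] u v by blast
    ultimately show "pA u v \<in> ?W" by blast
  next
    fix r u assume "u \<in> ?W"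
    then obtain s c where u: "u = pA s (sM c x)" "s \<in> lspan L S" by blast
    have "sM r u = pA (sM r s) (sM (r*c) x)" using u sC x by (simp add: sm_dist_vec sm_assoc)
    moreover have "sM r s \<in> lspan L S" using lsub_sm[OF sub] u by blast
    ultimately show "sM r u \<in> ?W" by blast
  qed
  show "insert x S \<subseteq> ?W"
  proof
    fix y assume "y \<in> insert x S"
    then show "y \<in> ?W"
    proof
      assume "y = x"
      then show ?thesis using lsub_zero[OF sub] x by (auto intro!: exI[of _ zR] exI[of _ 1])
    next
      assume "y \<in> S"
      then show ?thesis using lspan_sup[of S] S x by (auto intro!: exI[of _ y] exI[of _ 0])
    qed
  qed
qed

end

definition tr :: "('k, 'b) liealg \<Rightarrow> ('b \<Rightarrow> 'a) \<Rightarrow> ('k, 'a) liealg" where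
"tr M e = \<lparr>lcarrier = range e, lzero = e (lzero M),
   ladd = \<lambda>x y. e (ladd M (inv e x) (inv e y)), lneg = \<lambda>x. e (lneg M (inv e x)),
   lsmult = \<lambda>c x. e (lsmult M c (inv e x)), lbr = \<lambda>x y. e (lbr M (inv e x) (inv e y))\<rparr>"

lemma tr_simps:
  assumes "inj e"
  shows "lcarrier (tr M e) = range e" "lzero (tr M e) = e (lzero M)"
    "ladd (tr M e) (e x) (e y) = e (ladd M x y)"
    "lneg (tr M e) (e x) = e (lneg M x)"
    "lsmult (tr M e) c (e x) = e (lsmult M c x)"
    "lbr (tr M e) (e x) (e y) = e (lbr M x y)"
  using assms by (simp_all add: tr_def inv_f_f)

definition M2c :: "('k::field, 'k \<times> 'k) liealg" where
 "M2c = \<lparr>lcarrier = UNIV, lzero = (0,0), ladd = \<lambda>p q. (fst p + fst q, snd p + snd q),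
    lneg = \<lambda>p. (- fst p, - snd p), lsmult = \<lambda>r p. (r * fst p, r * snd p),
    lbr = \<lambda>p q. (0, fst p * snd q - fst q * snd p)\<rparr>"

lemma M2c_lie: "lie_algebra (M2c :: ('k::field, 'k \<times> 'k) liealg)"
  unfolding lie_algebra_def M2c_def by (simp add: algebra_simps)

lemma M2c_meta: "metabelian (M2c :: ('k::field, 'k \<times> 'k) liealg)"
  unfolding metabelian_def M2c_def by simp

lemma M2_lie: "inj (e :: 'k::field \<times> 'k \<Rightarrow> 'a) \<Longrightarrow> lie_algebra (tr (M2c :: ('k, 'k\<times>'k) liealg) e)"
  unfolding lie_algebra_def tr_def M2c_def by (simp add: inv_f_f algebra_simps)

lemma M2_meta: "inj (e :: 'k::field \<times> 'k \<Rightarrow> 'a) \<Longrightarrow> metabelian (tr (M2c :: ('k, 'k\<times>'k) liealg) e)"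
  unfolding metabelian_def tr_def M2c_def by (simp add: inv_f_f)



context LA begin

abbreviation "BB \<equiv> {bR a b | a b. a \<in> CC \<and> b \<in> CC}"

lemma BB_C: "BB \<subseteq> CC" by auto

lemma D_eq: "derived L = lspan L BB" unfolding derived_def by simp

lemma D_sub: "lsubspace L (derived L)" unfolding D_eq by (rule lspan_sub[OF BB_C])
lemma D_C: "derived L \<subseteq> CC" using lsub_C[OF D_sub] .
lemma BB_D: "bR a b \<in> derived L" if "a \<in> CC" "b \<in> CC" using that lspan_sup[of BB] unfolding D_eq by blast

lemma jacobi: "x\<in>CC \<Longrightarrow> y\<in>CC \<Longrightarrow> z\<in>CC \<Longrightarrow>
  pA (pA (bR x (bR y z)) (bR y (bR z x))) (bR z (bR x y)) = zR"
  using la unfolding lie_algebra_def by metis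

lemma ker_l_sub: assumes "b \<in> CC" shows "lsubspace L {a \<in> CC. bR a b = zR}"
  unfolding lsubspace_def using assms by (auto simp: br_add_l br_sm_l)

lemma ker_r_sub: assumes "a \<in> CC" shows "lsubspace L {b \<in> CC. bR a b = zR}"
  unfolding lsubspace_def using assms by (auto simp: br_add_r br_sm_r)

lemma metab_D: assumes m: "metabelian L" and a: "a \<in> derived L" and b: "b \<in> derived L"
  shows "bR a b = zR"
proof -
  have s1: "bR a' (bR c d) = zR" if "a' \<in> derived L" "c \<in> CC" "d \<in> CC" for a' c d
  proof -
    have "BB \<subseteq> {a \<in> CC. bR a (bR c d) = zR}" using m that unfolding metabelian_def by auto
    then have "derived L \<subseteq> {a \<in> CC. bR a (bR c d) = zR}"
      unfolding D_eq by (rule lspan_least[OF ker_l_sub, rotated]) (use that in simp)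
    then show ?thesis using that by blast
  qed
  have aC: "a \<in> CC" using a D_C by blast
  have "BB \<subseteq> {b \<in> CC. bR a b = zR}" using s1[OF a] by auto
  then have "derived L \<subseteq> {b \<in> CC. bR a b = zR}"
    unfolding D_eq by (rule lspan_least[OF ker_r_sub[OF aC], rotated])
  then show ?thesis using b by blast
qed

lemma D_ideal: "lideal L (derived L)"
  unfolding lideal_def using D_sub D_C BB_D by blast

lemma zero_sub: "lsubspace L {zR}" unfolding lsubspace_def by simp

lemma D_nil: assumes "metabelian L" shows "nilpotent_set L (derived L)"
  unfolding nilpotent_set_def
proof (rule exI[of _ 1])
  have "{bR a b | a b. a \<in> derived L \<and> b \<in> lcs L (derived L) 0} \<subseteq> {zR}"
    using metab_D[OF assms] by auto
  then show "lcs L (derived L) 1 \<subseteq> {zR}" by (simp add: lspan_least[OF zero_sub])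
qed

lemma gen:
  assumes fm: "free_metabelian L X iota"
    and S: "S \<subseteq> CC" "zR \<in> S" "\<And>x y. x\<in>S \<Longrightarrow> y\<in>S \<Longrightarrow> pA x y \<in> S"
      "\<And>x. x\<in>S \<Longrightarrow> nG x \<in> S" "\<And>c x. x\<in>S \<Longrightarrow> sM c x \<in> S"
      "\<And>x y. x\<in>S \<Longrightarrow> y\<in>S \<Longrightarrow> bR x y \<in> S"
    and X: "iota ` X \<subseteq> S"
  shows "CC \<subseteq> S"
proof -
  let ?M = "L\<lparr>lcarrier := S\<rparr>"
  have sC: "x \<in> S \<Longrightarrow> x \<in> CC" for x using S(1) by blast
  have lM: "lie_algebra ?M" unfolding lie_algebra_def
    apply simp
    apply (intro conjI ballI allI)
    using S apply (simp_all add: sC sm_assoc sm_dist_vec sm_dist_sc br_add_l br_add_r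
        br_sm_l br_sm_r jacobi)
     apply (rule add_assoc; simp add: sC)
    apply (rule add_comm; simp add: sC)
    done
  note fm' = fm[unfolded free_metabelian_def]
  have mL: "metabelian L" using fm' by (rule conjunct1[OF conjunct2])
  have XC: "iota ` X \<subseteq> CC" using fm' by (rule conjunct1[OF conjunct2[OF conjunct2]])
  note univ = conjunct2[OF conjunct2[OF conjunct2[OF fm']]]
  have mM: "metabelian ?M" unfolding metabelian_def
  proof (intro ballI)
    fix a b c d assume "a \<in> lcarrier ?M" "b \<in> lcarrier ?M" "c \<in> lcarrier ?M" "d \<in> lcarrier ?M"
    then have "a \<in> CC" "b \<in> CC" "c \<in> CC" "d \<in> CC" using sC by auto
    then show "lbr ?M (lbr ?M a b) (lbr ?M c d) = lzero ?M"
      using mL unfolding metabelian_def by simp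
  qed
  have Xi: "\<forall>x\<in>X. iota x \<in> lcarrier ?M" using X by (simp add: image_subset_iff)
  obtain f where f: "lie_hom L ?M f" "\<forall>x\<in>X. f (iota x) = iota x"
    using univ[rule_format, OF conjI[OF lM mM], where g=iota] Xi by blast
  have fL: "lie_hom L L f" using f(1) sC unfolding lie_hom_def by simp
  have idL: "lie_hom L L id" unfolding lie_hom_def by simp
  have XiL: "\<forall>x\<in>X. iota x \<in> CC" using XC by blast
  have "\<forall>y\<in>CC. f y = id y"
    using univ[rule_format, OF conjI[OF la mL], where g=iota] XiL fL idL f(2) by (metis id_apply)
  then show ?thesis using f(1) unfolding lie_hom_def by auto
qed

end


context LA begin

lemma span_gen:
  assumes fm: "free_metabelian L X iota" and v: "v \<in> CC"
  shows "\<exists>T. finite T \<and> T \<subseteq> X \<and> v \<in> lspan L (derived L \<union> iota ` T)"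
proof -
  have XC: "iota ` X \<subseteq> CC" using fm unfolding free_metabelian_def by (elim conjE)
  have GC: "T \<subseteq> X \<Longrightarrow> derived L \<union> iota ` T \<subseteq> CC" for T using XC D_C by blast
  let ?S = "{v\<in>CC. \<exists>T. finite T \<and> T \<subseteq> X \<and> v \<in> lspan L (derived L \<union> iota ` T)}"
  have "CC \<subseteq> ?S"
  proof (rule gen[OF fm])
    show "?S \<subseteq> CC" by blast
    show "zR \<in> ?S" using lsub_zero[OF lspan_sub[OF GC[of "{}"]]] by auto
  next
    fix x y assume x: "x \<in> ?S" and y: "y \<in> ?S"
    then obtain T T' where T: "finite T" "T \<subseteq> X" "x \<in> lspan L (derived L \<union> iota ` T)"
      and T': "finite T'" "T' \<subseteq> X" "y \<in> lspan L (derived L \<union> iota ` T')" by blast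
    have TT: "T \<union> T' \<subseteq> X" using T T' by blast
    have sub: "lsubspace L (lspan L (derived L \<union> iota ` (T \<union> T')))"
      by (rule lspan_sub[OF GC[OF TT]])
    have "lspan L (derived L \<union> iota ` T) \<subseteq> lspan L (derived L \<union> iota ` (T \<union> T'))"
      by (rule lspan_mono[OF _ GC[OF TT]]) blast
    moreover have "lspan L (derived L \<union> iota ` T') \<subseteq> lspan L (derived L \<union> iota ` (T \<union> T'))"
      by (rule lspan_mono[OF _ GC[OF TT]]) blast
    ultimately have "pA x y \<in> lspan L (derived L \<union> iota ` (T \<union> T'))"
      using lsub_add[OF sub] T T' by blast
    moreover have "pA x y \<in> CC" using x y by simp
    ultimately show "pA x y \<in> ?S" using T T' by (intro CollectI conjI exI[of _ "T \<union> T'"]) auto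
    show "bR x y \<in> ?S"
    proof -
      have "bR x y \<in> derived L" using x y BB_D by blast
      then have "bR x y \<in> lspan L (derived L \<union> iota ` {})" using lspan_sup[of "derived L \<union> iota ` {}"] by blast
      moreover have "bR x y \<in> CC" using x y by simp
      ultimately show ?thesis by (intro CollectI conjI exI[of _ "{}"]) auto
    qed
  next
    fix c x assume x: "x \<in> ?S"
    then obtain T where T: "finite T" "T \<subseteq> X" "x \<in> lspan L (derived L \<union> iota ` T)" by blast
    have sub: "lsubspace L (lspan L (derived L \<union> iota ` T))" by (rule lspan_sub[OF GC[OF T(2)]])
    have xC: "x \<in> CC" using x by blast
    show "sM c x \<in> ?S" using lsub_sm[OF sub T(3)] xC T by (intro CollectI conjI exI[of _ T]) auto
    show "nG x \<in> ?S" using lsub_sm[OF sub T(3), of "-1"] xC T neg_sm[OF xC]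
      by (intro CollectI conjI exI[of _ T]) auto
  next
    show "iota ` X \<subseteq> ?S"
    proof
      fix z assume "z \<in> iota ` X"
      then obtain x where x: "x \<in> X" "z = iota x" by blast
      have "z \<in> lspan L (derived L \<union> iota ` {x})" using lspan_sup[of "derived L \<union> iota ` {x}"] x by blast
      then show "z \<in> ?S" using x XC by (intro CollectI conjI exI[of _ "{x}"]) auto
    qed
  qed
  then show ?thesis using v by blast
qed

lemma lam:
  assumes XC: "iota ` X \<subseteq> CC"
    and lin: "\<forall>j\<in>X. \<forall>x\<in>CC. \<forall>y\<in>CC. \<Lambda> j (pA x y) = \<Lambda> j x + \<Lambda> j y"
    and sml: "\<forall>j\<in>X. \<forall>c. \<forall>x\<in>CC. \<Lambda> j (sM c x) = c * \<Lambda> j x"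
    and dz: "\<forall>j\<in>X. \<forall>d\<in>derived L. \<Lambda> j d = 0"
    and dl: "\<forall>j\<in>X. \<forall>i\<in>X. \<Lambda> j (iota i) = (if i = j then 1 else 0)"
  shows "finite T \<Longrightarrow> T \<subseteq> X \<Longrightarrow> u \<in> lspan L (derived L \<union> iota ` T) \<Longrightarrow>
      (\<forall>j\<in>T. \<Lambda> j u = 0) \<Longrightarrow> u \<in> derived L"
proof (induction T arbitrary: u rule: finite_induct)
  case empty
  then show ?case using lspan_least[OF D_sub, of "derived L"] by auto
next
  case (insert t T)
  have GC: "derived L \<union> iota ` T \<subseteq> CC" using XC D_C insert by blast
  have tX: "t \<in> X" using insert by blast
  have xt: "iota t \<in> CC" using XC tX by blast
  have "u \<in> lspan L (insert (iota t) (derived L \<union> iota ` T))" using insert.prems by simp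
  then obtain s c where s: "u = pA s (sM c (iota t))" "s \<in> lspan L (derived L \<union> iota ` T)"
    using lspan_insert[OF GC xt] by blast
  have sC: "s \<in> CC" using s(2) lspan_in[OF GC] by blast
  have z0: "\<Lambda> t zR = 0" using sml tX sm_zero_sc[of zR] by (metis mult_zero_left zero_in)
  have Ksub: "lsubspace L {v\<in>CC. \<Lambda> t v = 0}"
    unfolding lsubspace_def using z0 lin sml tX by auto
  have "derived L \<union> iota ` T \<subseteq> {v\<in>CC. \<Lambda> t v = 0}"
    using dz dl tX insert.hyps(2) insert.prems(1) D_C XC by (auto simp: subset_iff)
  then have "s \<in> {v\<in>CC. \<Lambda> t v = 0}" using lspan_least[OF Ksub] s(2) by blast
  then have "\<Lambda> t u = c" using s lin sml tX dl xt by simp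
  then have c0: "c = 0" using insert.prems by simp
  then have us: "u = s" using s sC xt by simp
  show ?case
    by (rule insert.IH) (use insert.prems us s in auto)
qed

lemma one_gen:
  assumes fm: "free_metabelian L X iota" and j: "j \<in> X" and X: "X \<subseteq> {j}"
  shows "abelian L"
proof -
  have xC: "iota j \<in> CC" using fm j unfolding free_metabelian_def by (simp add: image_subset_iff)
  let ?S = "range (\<lambda>c. sM c (iota j))"
  have "CC \<subseteq> ?S"
  proof (rule gen[OF fm])
    show "?S \<subseteq> CC" using xC by auto
    show "zR \<in> ?S" by (rule range_eqI[of _ _ 0]) (use xC in simp)
    show "pA x y \<in> ?S" if xS: "x \<in> ?S" "y \<in> ?S" for x y
    proof -
      obtain c d where "x = sM c (iota j)" "y = sM d (iota j)" using xS by blast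
      then have "pA x y = sM (c + d) (iota j)" using xC by (simp add: sm_dist_sc)
      then show ?thesis by (rule range_eqI)
    qed
    show "sM c x \<in> ?S" if xS: "x \<in> ?S" for c x
    proof -
      obtain d where "x = sM d (iota j)" using xS by blast
      then have "sM c x = sM (c * d) (iota j)" using xC by (simp add: sm_assoc)
      then show ?thesis by (rule range_eqI)
    qed
    show "nG x \<in> ?S" if xS: "x \<in> ?S" for x
    proof -
      obtain d where "x = sM d (iota j)" using xS by blast
      then have "nG x = sM (-1 * d) (iota j)" using xC by (simp add: sm_assoc neg_sm)
      then show ?thesis by (rule range_eqI)
    qed
    show "bR x y \<in> ?S" if xS: "x \<in> ?S" "y \<in> ?S" for x y
    proof -
      obtain c d where "x = sM c (iota j)" "y = sM d (iota j)" using xS by blast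
      then have "bR x y = sM c (sM d (bR (iota j) (iota j)))" using xC by (simp add: br_sm_l br_sm_r)
      also have "\<dots> = sM 0 (iota j)" using xC by simp
      finally show ?thesis by (rule range_eqI)
    qed
    show "iota ` X \<subseteq> ?S"
    proof
      fix z assume "z \<in> iota ` X"
      then have "z = sM 1 (iota j)" using X xC by auto
      then show "z \<in> ?S" by (rule range_eqI)
    qed
  qed
  show ?thesis unfolding abelian_def
  proof (intro ballI)
    fix a b assume "a \<in> CC" "b \<in> CC"
    then obtain c d where "a = sM c (iota j)" "b = sM d (iota j)" using \<open>CC \<subseteq> ?S\<close> by blast
    then show "bR a b = zR" using xC by (simp add: br_sm_l br_sm_r)
  qed
qed

lemma emb_inj:
  assumes u: "u \<in> CC" and w: "w \<in> CC" and nz: "bR u w \<noteq> zR"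
  shows "inj (\<lambda>p. pA (sM (fst p) u) (sM (snd p) w))"
proof (rule injI)
  fix p q assume eq: "pA (sM (fst p) u) (sM (snd p) w) = pA (sM (fst q) u) (sM (snd q) w)"
  have r: "bR (pA (sM c u) (sM d w)) w = sM c (bR u w)" for c d
    using u w by (simp add: br_add_l br_sm_l)
  have l: "bR u (pA (sM c u) (sM d w)) = sM d (bR u w)" for c d
    using u w by (simp add: br_add_r br_sm_r)
  have "fst p = fst q" using r[of "fst p" "snd p"] r[of "fst q" "snd q"] eq sm_eq_cancel[OF _ nz] u w by simp
  moreover have "snd p = snd q" using l[of "fst p" "snd p"] l[of "fst q" "snd q"] eq sm_eq_cancel[OF _ nz] u w by simp
  ultimately show "p = q" by (simp add: prod_eq_iff)
qed

lemma hom_M2: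
  assumes h: "lie_hom L (tr (M2c :: ('k, 'k\<times>'k) liealg) e) \<phi>" and inj: "inj e"
  defines "P \<equiv> \<lambda>v. inv e (\<phi> v)"
  shows "\<And>v. v \<in> CC \<Longrightarrow> \<phi> v = e (P v)"
    "\<And>x y. x \<in> CC \<Longrightarrow> y \<in> CC \<Longrightarrow> P (pA x y) = (fst (P x) + fst (P y), snd (P x) + snd (P y))"
    "\<And>c x. x \<in> CC \<Longrightarrow> P (sM c x) = (c * fst (P x), c * snd (P x))"
    "\<And>x y. x \<in> CC \<Longrightarrow> y \<in> CC \<Longrightarrow> P (bR x y) = (0, fst (P x) * snd (P y) - fst (P y) * snd (P x))"
proof -
  have rng: "v \<in> CC \<Longrightarrow> \<phi> v \<in> range e" for v using h unfolding lie_hom_def by (simp add: tr_simps[OF inj])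
  show e1: "\<phi> v = e (P v)" if "v \<in> CC" for v using rng[OF that] unfolding P_def by (simp add: f_inv_into_f)
  show "P (pA x y) = (fst (P x) + fst (P y), snd (P x) + snd (P y))" if "x \<in> CC" "y \<in> CC" for x y
  proof -
    have "\<phi> (pA x y) = ladd (tr M2c e) (e (P x)) (e (P y))" using h that e1 unfolding lie_hom_def by simp
    then show ?thesis unfolding P_def by (simp add: tr_simps[OF inj] inv_f_f[OF inj] M2c_def P_def)
  qed
  show "P (sM c x) = (c * fst (P x), c * snd (P x))" if "x \<in> CC" for c x
  proof -
    have "\<phi> (sM c x) = lsmult (tr M2c e) c (e (P x))" using h that e1 unfolding lie_hom_def by simp
    then show ?thesis unfolding P_def by (simp add: tr_simps[OF inj] inv_f_f[OF inj] M2c_def P_def)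
  qed
  show "P (bR x y) = (0, fst (P x) * snd (P y) - fst (P y) * snd (P x))" if "x \<in> CC" "y \<in> CC" for x y
  proof -
    have "\<phi> (bR x y) = lbr (tr M2c e) (e (P x)) (e (P y))" using h that e1 unfolding lie_hom_def by simp
    then show ?thesis unfolding P_def by (simp add: tr_simps[OF inj] inv_f_f[OF inj] M2c_def P_def)
  qed
qed

end


context LA begin

lemma main:
  assumes fm: "free_metabelian L X iota" and na: "\<not> abelian L"
    and I: "lideal L I" and nil: "nilpotent_set L I" and a: "a \<in> I"
  shows "a \<in> derived L"
proof (rule ccontr)
  assume naD: "a \<notin> derived L"
  note fm' = fm[unfolded free_metabelian_def]
  have mL: "metabelian L" using fm' by (rule conjunct1[OF conjunct2])
  have XC: "iota ` X \<subseteq> CC" using fm' by (rule conjunct1[OF conjunct2[OF conjunct2]])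
  note univ = conjunct2[OF conjunct2[OF conjunct2[OF fm']]]
  have IC: "I \<subseteq> CC" using I unfolding lideal_def lsubspace_def by blast
  have aC: "a \<in> CC" using a IC by blast
  obtain u w where uw: "u \<in> CC" "w \<in> CC" "bR u w \<noteq> zR" using na unfolding abelian_def by blast
  define e where "e = (\<lambda>p::'k\<times>'k. pA (sM (fst p) u) (sM (snd p) w))"
  have inj: "inj e" unfolding e_def by (rule emb_inj[OF uw])
  define M where "M = tr (M2c :: ('k, 'k\<times>'k) liealg) e"
  have lM: "lie_algebra M" unfolding M_def by (rule M2_lie[OF inj])
  have mM: "metabelian M" unfolding M_def by (rule M2_meta[OF inj])
  have ex: "\<exists>\<phi>. lie_hom L M \<phi> \<and> (\<forall>i\<in>X. \<phi> (iota i) = (if i = j then e (1,0) else e (0,1)))"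
    if "j \<in> X" for j
  proof -
    have g: "\<forall>i\<in>X. (if i = j then e (1,0) else e (0,1)) \<in> lcarrier M"
      unfolding M_def by (simp add: tr_simps[OF inj])
    show ?thesis
      using univ[rule_format, OF conjI[OF lM mM], where g="\<lambda>i. if i = j then e (1,0) else e (0,1)"] g
      by blast
  qed
  then obtain \<Phi> where \<Phi>: "\<And>j. j \<in> X \<Longrightarrow> lie_hom L M (\<Phi> j) \<and>
      (\<forall>i\<in>X. \<Phi> j (iota i) = (if i = j then e (1,0) else e (0,1)))"
    by metis
  define P where "P = (\<lambda>j v. inv e (\<Phi> j v))"
  have hP: "\<And>v. v \<in> CC \<Longrightarrow> \<Phi> j v = e (P j v)"
    "\<And>x y. x \<in> CC \<Longrightarrow> y \<in> CC \<Longrightarrow> P j (pA x y) = (fst (P j x) + fst (P j y), snd (P j x) + snd (P j y))"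
    "\<And>c x. x \<in> CC \<Longrightarrow> P j (sM c x) = (c * fst (P j x), c * snd (P j x))"
    "\<And>x y. x \<in> CC \<Longrightarrow> y \<in> CC \<Longrightarrow> P j (bR x y) = (0, fst (P j x) * snd (P j y) - fst (P j y) * snd (P j x))"
    if "j \<in> X" for j
    using hom_M2[OF \<Phi>[OF that, THEN conjunct1, unfolded M_def] inj] unfolding P_def by auto
  have Pgen: "P j (iota i) = (if i = j then (1,0) else (0,1))" if "j \<in> X" "i \<in> X" for i j
    using \<Phi>[OF that(1)] that(2) unfolding P_def by (simp add: inv_f_f[OF inj])
  define \<Lambda> where "\<Lambda> = (\<lambda>j v. fst (P j v))"
  have lin: "\<forall>j\<in>X. \<forall>x\<in>CC. \<forall>y\<in>CC. \<Lambda> j (pA x y) = \<Lambda> j x + \<Lambda> j y"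
    unfolding \<Lambda>_def using hP(2) by simp
  have sml: "\<forall>j\<in>X. \<forall>c. \<forall>x\<in>CC. \<Lambda> j (sM c x) = c * \<Lambda> j x"
    unfolding \<Lambda>_def using hP(3) by simp
  have dz: "\<forall>j\<in>X. \<forall>d\<in>derived L. \<Lambda> j d = 0"
  proof (intro ballI)
    fix j d assume j: "j \<in> X" and d: "d \<in> derived L"
    have z0: "\<Lambda> j zR = 0" using sml j sm_zero_sc[of zR] by (metis mult_zero_left zero_in)
    have Ksub: "lsubspace L {v\<in>CC. \<Lambda> j v = 0}"
      unfolding lsubspace_def using z0 lin sml j by auto
    have "BB \<subseteq> {v\<in>CC. \<Lambda> j v = 0}" using hP(4)[OF j] unfolding \<Lambda>_def by auto
    then have "derived L \<subseteq> {v\<in>CC. \<Lambda> j v = 0}" unfolding D_eq by (rule lspan_least[OF Ksub])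
    then show "\<Lambda> j d = 0" using d by blast
  qed
  have dl: "\<forall>j\<in>X. \<forall>i\<in>X. \<Lambda> j (iota i) = (if i = j then 1 else 0)"
    unfolding \<Lambda>_def using Pgen by simp
  obtain T where T: "finite T" "T \<subseteq> X" "a \<in> lspan L (derived L \<union> iota ` T)"
    using span_gen[OF fm aC] by blast
  have "\<exists>j\<in>T. \<Lambda> j a \<noteq> 0"
  proof (rule ccontr)
    assume "\<not> (\<exists>j\<in>T. \<Lambda> j a \<noteq> 0)"
    then have "\<forall>j\<in>T. \<Lambda> j a = 0" by blast
    then have "a \<in> derived L" using lam[OF XC lin sml dz dl T] by blast
    then show False using naD by blast
  qed
  then obtain j where jT: "j \<in> T" and al: "\<Lambda> j a \<noteq> 0" by blast
  have j: "j \<in> X" using jT T by blast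
  obtain y where y: "y \<in> X" "y \<noteq> j"
  proof -
    have "\<not> X \<subseteq> {j}" using one_gen[OF fm j] na by blast
    then show ?thesis using that by blast
  qed
  have yC: "iota y \<in> CC" using XC y by blast
  define \<alpha> where "\<alpha> = \<Lambda> j a"
  define \<beta> where "\<beta> = snd (P j a)"
  have Pa: "P j a = (\<alpha>, \<beta>)" unfolding \<alpha>_def \<beta>_def \<Lambda>_def by simp
  define b where "b = (\<lambda>n. ((\<lambda>v. bR a v) ^^ n) (bR (iota y) a))"
  have b0: "b 0 = bR (iota y) a" unfolding b_def by simp
  have bS: "b (Suc n) = bR a (b n)" for n unfolding b_def by simp
  have bl: "b n \<in> CC \<and> b n \<in> lcs L I n" for n
  proof (induction n)
    case 0
    have "bR (iota y) a \<in> I" using I yC a unfolding lideal_def by blast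
    then show ?case using b0 yC aC by simp
  next
    case (Suc n)
    have "bR a (b n) \<in> {bR a' b' | a' b'. a' \<in> I \<and> b' \<in> lcs L I n}" using a Suc by blast
    then have "bR a (b n) \<in> lcs L I (Suc n)"
      using lspan_sup[of "{bR a' b' | a' b'. a' \<in> I \<and> b' \<in> lcs L I n}"] by auto
    then show ?case using bS Suc aC by simp
  qed
  have Pb: "P j (b n) = (0, - (\<alpha> ^ Suc n))" for n
  proof (induction n)
    case 0
    have "P j (b 0) = (0, fst (P j (iota y)) * snd (P j a) - fst (P j a) * snd (P j (iota y)))"
      using hP(4)[OF j yC aC] b0 by simp
    then show ?case using Pgen[OF j y(1)] y(2) Pa by simp
  next
    case (Suc n)
    have "P j (b (Suc n)) = (0, fst (P j a) * snd (P j (b n)) - fst (P j (b n)) * snd (P j a))"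
      using hP(4)[OF j aC] bl[of n] bS by simp
    then show ?case using Suc Pa by (simp add: algebra_simps)
  qed
  obtain n where n: "lcs L I n \<subseteq> {zR}" using nil unfolding nilpotent_set_def by blast
  have "b n = zR" using bl[of n] n by blast
  moreover have "P j zR = (0, 0)" using hP(3)[OF j, of zR 0] by simp
  ultimately have "\<alpha> ^ Suc n = 0" using Pb[of n] by simp
  then have "\<alpha> = 0" by auto
  then show False using al \<alpha>_def by simp
qed

end

theorem proposition2p3p2:
  fixes F :: "('k::field, 'a) liealg" and X :: "'x set" and iota :: "'x \<Rightarrow> 'a"
  assumes "free_metabelian F X iota"
    and "\<not> abelian F"
  shows "fitting F = derived F"
proof -
  have laF: "lie_algebra F" using assms(1) unfolding free_metabelian_def by (elim conjE)
  have mF: "metabelian F" using assms(1) unfolding free_metabelian_def by (elim conjE)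
  interpret LA F by (rule LA.intro[OF laF])
  let ?U = "\<Union>{I. lideal F I \<and> nilpotent_set F I}"
  have UD: "?U \<subseteq> derived F" using main[OF assms] by blast
  have DU: "derived F \<subseteq> ?U" using D_ideal D_nil[OF mF] by blast
  show ?thesis
  proof
    show "fitting F \<subseteq> derived F"
      unfolding fitting_def ideal_gen_def using D_ideal UD by blast
    show "derived F \<subseteq> fitting F"
      unfolding fitting_def ideal_gen_def using DU by blast
  qed
qed

end
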